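(* For every $n\in\mathbb N$, the exponential vector space $\mathscr D^n[0,\infty)$ has a basis and $\dim\mathscr D^n[0,\infty)=[1:0]$.
   Context: An exponential vector space (evs) over a field $K$ is a partially ordered set $(X,\leq)$ with a binary operation $+$ on $X$ and a map $K\times X\to X$, $(\alpha,x)\mapsto \alpha x$, such that: (A1) $(X,+)$ is a commutative semigroup with identity $\theta$; (A2) $x\leq y$ implies $x+z\leq y+z$ and $\alpha x\leq \alpha y$ for all $z\in X$, $\alpha\in K$; (A3) $\alpha(x+y)=\alpha x+\alpha y$, $\alpha(\beta x)=(\alpha\beta)x$, $(\alpha+\beta)x\leq \alpha x+\beta x$, $1x=x$; (A4) $\alpha x=\theta$ iff $\alpha=0$ or $x=\theta$; (A5) $x+(-1)x=\theta$ iff $x\in X_0$, where $X_0:=\{z\in X: y\not\leq z \text{ for all } y\in X\smallsetminus\{z\}\}$ (the set of minimal elements, a vector space over $K$); (A6) for each $x\in X$ there is $p\in X_0$ with $p\leq x$. $\mathscr D^n[0,\infty)$ is the set $[0,\infty)^n$ over the field $\mathbb C$ with componentwise addition, scalar multiplication $\alpha\cdot(x_1,\dots,x_n)=(|\alpha|x_1,\dots,|\alpha|x_n)$, and the lexicographic (dictionary) order: $x\leq y$ iff $x=y$ or $x_i<y_i$ at the first index $i$ where $x_i\neq y_i$; its primitive space is $\{(0,\dots,0)\}$. For $x\in X\smallsetminus X_0$ let $L(x):=\{z\in X: z\geq \alpha x+p \text{ for some } \alpha\in K\smallsetminus\{0\},\ p\in X_0\}$. A subset $B\subseteq X\smallsetminus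 X_0$ generates $X\smallsetminus X_0$ if $X\smallsetminus X_0=\bigcup_{b\in B}L(b)$. Elements $x,y\in X\smallsetminus X_0$ are orderly dependent if $x\in L(y)$ or $y\in L(x)$, and orderly independent otherwise; $B$ is orderly independent if any two distinct members are orderly independent. A basis of $X\smallsetminus X_0$ is an orderly independent generating subset. All bases have the same cardinality $\dim(X\smallsetminus X_0)$; $\dim X_0$ is the vector-space dimension of $X_0$ ($0$ if $X_0=\{\theta\}$), and $\dim X:=[\dim(X\smallsetminus X_0):\dim X_0]$. *)

theory Defs
  imports Complex_Main
begin

definition prim :: "'a set \<Rightarrow> ('a \<Rightarrow> 'a \<Rightarrow> bool) \<Rightarrow> 'a set" where
  "prim X le = {z \<in> X. \<forall>y \<in> X - {z}. \<not> le y z}"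

definition Lset :: "'a set \<Rightarrow> ('a \<Rightarrow> 'a \<Rightarrow> bool) \<Rightarrow> ('a \<Rightarrow> 'a \<Rightarrow> 'a)
    \<Rightarrow> ('k::field \<Rightarrow> 'a \<Rightarrow> 'a) \<Rightarrow> 'a \<Rightarrow> 'a set" where
  "Lset X le add smul x =
     {z \<in> X. \<exists>\<alpha>. \<alpha> \<noteq> 0 \<and> (\<exists>p \<in> prim X le. le (add (smul \<alpha> x) p) z)}"

definition generates :: "'a set \<Rightarrow> ('a \<Rightarrow> 'a \<Rightarrow> bool) \<Rightarrow> ('a \<Rightarrow> 'a \<Rightarrow> 'a)
    \<Rightarrow> ('k::field \<Rightarrow> 'a \<Rightarrow> 'a) \<Rightarrow> 'a set \<Rightarrow> bool" where
  "generates X le add smul B \<longleftrightarrow>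
     B \<subseteq> X - prim X le \<and> X - prim X le = (\<Union>b\<in>B. Lset X le add smul b)"

definition orderly_dependent :: "'a set \<Rightarrow> ('a \<Rightarrow> 'a \<Rightarrow> bool) \<Rightarrow> ('a \<Rightarrow> 'a \<Rightarrow> 'a)
    \<Rightarrow> ('k::field \<Rightarrow> 'a \<Rightarrow> 'a) \<Rightarrow> 'a \<Rightarrow> 'a \<Rightarrow> bool" where
  "orderly_dependent X le add smul x y \<longleftrightarrow>
     x \<in> Lset X le add smul y \<or> y \<in> Lset X le add smul x"

definition orderly_independent_set :: "'a set \<Rightarrow> ('a \<Rightarrow> 'a \<Rightarrow> bool) \<Rightarrow> ('a \<Rightarrow> 'a \<Rightarrow> 'a)
    \<Rightarrow> ('k::field \<Rightarrow> 'a \<Rightarrow> 'a) \<Rightarrow> 'a set \<Rightarrow> bool" where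
  "orderly_independent_set X le add smul B \<longleftrightarrow>
     (\<forall>x\<in>B. \<forall>y\<in>B. x \<noteq> y \<longrightarrow> \<not> orderly_dependent X le add smul x y)"

definition evs_basis :: "'a set \<Rightarrow> ('a \<Rightarrow> 'a \<Rightarrow> bool) \<Rightarrow> ('a \<Rightarrow> 'a \<Rightarrow> 'a)
    \<Rightarrow> ('k::field \<Rightarrow> 'a \<Rightarrow> 'a) \<Rightarrow> 'a set \<Rightarrow> bool" where
  "evs_basis X le add smul B \<longleftrightarrow>
     generates X le add smul B \<and> orderly_independent_set X le add smul B"

inductive_set lin_span :: "('a \<Rightarrow> 'a \<Rightarrow> 'a) \<Rightarrow> ('k::field \<Rightarrow> 'a \<Rightarrow> 'a) \<Rightarrow> 'a
    \<Rightarrow> 'a set \<Rightarrow> 'a set"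
  for add smul th S where
  zero: "th \<in> lin_span add smul th S"
| step: "s \<in> S \<Longrightarrow> v \<in> lin_span add smul th S \<Longrightarrow> add (smul \<alpha> s) v \<in> lin_span add smul th S"

definition lin_indep :: "('a \<Rightarrow> 'a \<Rightarrow> 'a) \<Rightarrow> ('k::field \<Rightarrow> 'a \<Rightarrow> 'a) \<Rightarrow> 'a \<Rightarrow> 'a set \<Rightarrow> bool" where
  "lin_indep add smul th S \<longleftrightarrow> (\<forall>s\<in>S. s \<notin> lin_span add smul th (S - {s}))"

definition dim_prim :: "'a set \<Rightarrow> ('a \<Rightarrow> 'a \<Rightarrow> bool) \<Rightarrow> ('a \<Rightarrow> 'a \<Rightarrow> 'a)
    \<Rightarrow> ('k::field \<Rightarrow> 'a \<Rightarrow> 'a) \<Rightarrow> 'a \<Rightarrow> nat" where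
  "dim_prim X le add smul th = card (SOME S. S \<subseteq> prim X le \<and> lin_indep add smul th S
      \<and> lin_span add smul th S = prim X le)"

text \<open>dim X = [dim(X \ X0) : dim X0]; dim(X \ X0) is the cardinality of a basis
  (well defined since all bases have the same cardinality).\<close>
definition evs_dim :: "'a set \<Rightarrow> ('a \<Rightarrow> 'a \<Rightarrow> bool) \<Rightarrow> ('a \<Rightarrow> 'a \<Rightarrow> 'a)
    \<Rightarrow> ('k::field \<Rightarrow> 'a \<Rightarrow> 'a) \<Rightarrow> 'a \<Rightarrow> nat \<times> nat" where
  "evs_dim X le add smul th =
     (card (SOME B. evs_basis X le add smul B), dim_prim X le add smul th)"

definition Dn :: "nat \<Rightarrow> (nat \<Rightarrow> real) set" where
  "Dn n = {x. (\<forall>i<n. 0 \<le> x i) \<and> (\<forall>i\<ge>n. x i = 0)}"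

definition Dn_le :: "nat \<Rightarrow> (nat \<Rightarrow> real) \<Rightarrow> (nat \<Rightarrow> real) \<Rightarrow> bool" where
  "Dn_le n x y \<longleftrightarrow> x = y \<or> (\<exists>i<n. (\<forall>j<i. x j = y j) \<and> x i < y i)"

definition Dn_add :: "(nat \<Rightarrow> real) \<Rightarrow> (nat \<Rightarrow> real) \<Rightarrow> (nat \<Rightarrow> real)" where
  "Dn_add x y = (\<lambda>i. x i + y i)"

definition Dn_smul :: "complex \<Rightarrow> (nat \<Rightarrow> real) \<Rightarrow> (nat \<Rightarrow> real)" where
  "Dn_smul \<alpha> x = (\<lambda>i. cmod \<alpha> * x i)"

definition Dn_zero :: "nat \<Rightarrow> real" where
  "Dn_zero = (\<lambda>i. 0)"

end

theory Submission
  imports Defs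
begin

lemma prim_Dn: "prim (Dn n) (Dn_le n) = {Dn_zero}"
proof -
  have z: "Dn_zero \<in> Dn n" by (simp add: Dn_def Dn_zero_def)
  have a: "Dn_le n y Dn_zero \<Longrightarrow> y \<in> Dn n \<Longrightarrow> y = Dn_zero" for y
    by (auto simp: Dn_le_def Dn_def Dn_zero_def)
  have b: "z \<in> Dn n \<Longrightarrow> z \<noteq> Dn_zero \<Longrightarrow> Dn_le n Dn_zero z" for z
  proof -
    assume zz: "z \<in> Dn n" "z \<noteq> Dn_zero"
    then obtain i where "z i \<noteq> 0" by (auto simp: Dn_zero_def)
    hence ex: "\<exists>i. z i \<noteq> 0" by blast
    define k where "k = (LEAST i. z i \<noteq> 0)"
    have k1: "z k \<noteq> 0" unfolding k_def by (rule LeastI_ex[OF ex])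
    have k2: "\<forall>j<k. z j = 0" unfolding k_def using not_less_Least by blast
    have "k < n" using k1 zz(1) by (auto simp: Dn_def) (meson not_less)
    hence "z k > 0" using k1 zz(1) by (auto simp: Dn_def)
    then show ?thesis unfolding Dn_le_def Dn_zero_def using k2 \<open>k<n\<close> by auto
  qed
  show ?thesis using z a b unfolding prim_def by auto
qed

lemma lead_ex:
  assumes "x \<in> Dn n" "x \<noteq> Dn_zero"
  shows "\<exists>i<n. 0 < x i \<and> (\<forall>k<i. x k = 0)"
proof -
  obtain i where "x i \<noteq> 0" using assms by (auto simp: Dn_zero_def)
  hence ex: "\<exists>i. x i \<noteq> 0" by blast
  define k where "k = (LEAST i. x i \<noteq> 0)"
  have k1: "x k \<noteq> 0" unfolding k_def by (rule LeastI_ex[OF ex])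
  have k2: "\<forall>j<k. x j = 0" unfolding k_def using not_less_Least by blast
  have "k < n" using k1 assms(1) by (auto simp: Dn_def) (meson not_less)
  hence "x k > 0" using k1 assms(1) by (auto simp: Dn_def)
  then show ?thesis using k2 \<open>k<n\<close> by auto
qed

lemma inL:
  assumes x: "x \<in> Dn n" and y: "y \<in> Dn n"
    and i: "i < n" "0 < x i" "\<forall>k<i. x k = 0"
    and j: "i \<le> j" "0 < y j" "\<forall>k<j. y k = 0"
  shows "x \<in> Lset (Dn n) (Dn_le n) Dn_add Dn_smul y"
proof -
  define c where "c = x i / (2 * y j)"
  have c: "c > 0" using i j by (simp add: c_def)
  have "Dn_le n (Dn_add (Dn_smul (complex_of_real c) y) Dn_zero) x"
  proof -
    have e: "\<forall>k<i. c * y k = x k" using i j by auto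
    have "c * y i < x i"
    proof (cases "i = j")
      case True then show ?thesis using i j by (simp add: c_def)
    next
      case False then show ?thesis using i j by auto
    qed
    then show ?thesis using e c i unfolding Dn_le_def Dn_add_def Dn_smul_def Dn_zero_def
      by (intro disjI2 exI[of _ i]) auto
  qed
  then show ?thesis unfolding Lset_def prim_Dn using x c
    by (intro CollectI conjI exI[of _ "complex_of_real c"]) auto
qed

lemma dep:
  assumes "x \<in> Dn n" "y \<in> Dn n" "x \<noteq> Dn_zero" "y \<noteq> Dn_zero"
  shows "orderly_dependent (Dn n) (Dn_le n) Dn_add Dn_smul x y"
proof -
  obtain i where i: "i<n" "0 < x i" "\<forall>k<i. x k = 0" using lead_ex assms by blast
  obtain j where j: "j<n" "0 < y j" "\<forall>k<j. y k = 0" using lead_ex assms by blast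
  show ?thesis
  proof (cases "i \<le> j")
    case True then show ?thesis unfolding orderly_dependent_def
      using inL[OF assms(1,2) i True j(2,3)] by blast
  next
    case False then show ?thesis unfolding orderly_dependent_def
      using inL[OF assms(2,1) j(1,2,3) _ i(2,3)] False by simp
  qed
qed

lemma Lset_sub:
  assumes b: "b \<in> Dn n" "b \<noteq> Dn_zero"
  shows "Lset (Dn n) (Dn_le n) Dn_add Dn_smul b \<subseteq> Dn n - {Dn_zero}"
proof
  fix z assume z: "z \<in> Lset (Dn n) (Dn_le n) Dn_add Dn_smul b"
  then obtain \<alpha> :: complex where a: "\<alpha> \<noteq> 0" "Dn_le n (Dn_add (Dn_smul \<alpha> b) Dn_zero) z" "z \<in> Dn n"
    unfolding Lset_def prim_Dn by auto
  obtain i where i: "i<n" "0 < b i" "\<forall>k<i. b k = 0" using lead_ex b by blast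
  have "z \<noteq> Dn_zero"
  proof
    assume "z = Dn_zero"
    with a(2) have "Dn_le n (Dn_smul \<alpha> b) Dn_zero" by (simp add: Dn_add_def Dn_zero_def)
    moreover have "Dn_smul \<alpha> b \<noteq> Dn_zero"
    proof
      assume "Dn_smul \<alpha> b = Dn_zero"
      hence "cmod \<alpha> * b i = 0" unfolding Dn_smul_def Dn_zero_def by meson
      thus False using a(1) i by simp
    qed
    moreover have "\<forall>k<n. 0 \<le> Dn_smul \<alpha> b k" using b(1) by (simp add: Dn_smul_def Dn_def)
    ultimately show False unfolding Dn_le_def Dn_zero_def
      by (meson less_trans not_less)
  qed
  then show "z \<in> Dn n - {Dn_zero}" using a by auto
qed

lemma basis_card:
  assumes "n \<ge> 1" "evs_basis (Dn n) (Dn_le n) Dn_add Dn_smul B"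
  shows "card B = 1"
proof -
  define e where "e = (\<lambda>i::nat. if i = n - 1 then (1::real) else 0)"
  have e: "e \<in> Dn n" "e \<noteq> Dn_zero" using assms(1)
    by (auto simp: e_def Dn_def Dn_zero_def fun_eq_iff)
  have sub: "B \<subseteq> Dn n - {Dn_zero}" and cov: "Dn n - {Dn_zero} = (\<Union>b\<in>B. Lset (Dn n) (Dn_le n) Dn_add Dn_smul b)"
    and ind: "orderly_independent_set (Dn n) (Dn_le n) Dn_add Dn_smul B"
    using assms(2) unfolding evs_basis_def generates_def prim_Dn by auto
  from cov e obtain b where bB: "b \<in> B" by blast
  have "B = {b}"
  proof (intro equalityI subsetI)
    fix x assume "x \<in> B"
    show "x \<in> {b}"
    proof (rule ccontr)
      assume "x \<notin> {b}"
      hence "\<not> orderly_dependent (Dn n) (Dn_le n) Dn_add Dn_smul x b"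
        using ind \<open>x \<in> B\<close> bB unfolding orderly_independent_set_def by auto
      moreover have "orderly_dependent (Dn n) (Dn_le n) Dn_add Dn_smul x b"
        using dep sub \<open>x \<in> B\<close> bB by blast
      ultimately show False by blast
    qed
  qed (use bB in auto)
  then show ?thesis by simp
qed

lemma basis_ex:
  assumes "n \<ge> 1"
  shows "evs_basis (Dn n) (Dn_le n) Dn_add Dn_smul {\<lambda>i::nat. if i = n - 1 then (1::real) else 0}"
proof -
  define e where "e = (\<lambda>i::nat. if i = n - 1 then (1::real) else 0)"
  have e: "e \<in> Dn n" "e \<noteq> Dn_zero" using assms(1)
    by (auto simp: e_def Dn_def Dn_zero_def fun_eq_iff)
  have "Dn n - {Dn_zero} \<subseteq> Lset (Dn n) (Dn_le n) Dn_add Dn_smul e"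
  proof
    fix x assume x: "x \<in> Dn n - {Dn_zero}"
    obtain i where i: "i<n" "0 < x i" "\<forall>k<i. x k = 0" using lead_ex x by blast
    show "x \<in> Lset (Dn n) (Dn_le n) Dn_add Dn_smul e"
      using inL[OF _ e(1) i, of "n-1"] x i(1) by (auto simp: e_def)
  qed
  with Lset_sub[OF e] have "Dn n - {Dn_zero} = Lset (Dn n) (Dn_le n) Dn_add Dn_smul e" by blast
  then show ?thesis unfolding e_def[symmetric] evs_basis_def generates_def prim_Dn
      orderly_independent_set_def using e by auto
qed

lemma span_empty: "lin_span add smul th {} = {th}"
proof -
  have "v \<in> lin_span add smul th {} \<Longrightarrow> v = th" for v
    by (induction rule: lin_span.induct) auto
  then show ?thesis using lin_span.zero[of th add smul "{}"] by blast
qed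

lemma dimprim: "dim_prim (Dn n) (Dn_le n) Dn_add (Dn_smul :: complex \<Rightarrow> _) Dn_zero = 0"
proof -
  let ?P = "\<lambda>S. S \<subseteq> prim (Dn n) (Dn_le n) \<and> lin_indep Dn_add (Dn_smul :: complex \<Rightarrow> _) Dn_zero S
      \<and> lin_span Dn_add (Dn_smul :: complex \<Rightarrow> _) Dn_zero S = prim (Dn n) (Dn_le n)"
  have "?P {}" unfolding prim_Dn lin_indep_def by (simp add: span_empty)
  hence P: "?P (SOME S. ?P S)" by (rule someI)
  have "(SOME S. ?P S) = {}"
  proof (rule ccontr)
    assume "(SOME S. ?P S) \<noteq> {}"
    with P have "(SOME S. ?P S) = {Dn_zero}" unfolding prim_Dn by blast
    with P show False unfolding lin_indep_def by (auto simp: span_empty)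
  qed
  then show ?thesis unfolding dim_prim_def by simp
qed

theorem mainTheorem13:
  fixes n :: nat
  assumes "n \<ge> 1"
  shows "(\<exists>B. evs_basis (Dn n) (Dn_le n) Dn_add Dn_smul B)
       \<and> evs_dim (Dn n) (Dn_le n) Dn_add Dn_smul Dn_zero = (1, 0)"
proof
  show ex: "\<exists>B. evs_basis (Dn n) (Dn_le n) Dn_add Dn_smul B" using basis_ex[OF assms] by blast
  have "evs_basis (Dn n) (Dn_le n) Dn_add Dn_smul (SOME B. evs_basis (Dn n) (Dn_le n) Dn_add Dn_smul B)"
    using someI_ex[OF ex] .
  then show "evs_dim (Dn n) (Dn_le n) Dn_add Dn_smul Dn_zero = (1, 0)"
    unfolding evs_dim_def using basis_card[OF assms] dimprim by simp
qed

end
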